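(* Let $k\ge3$. Let $C$ and $C'$ be cycles of length $2k$ with $E(C)\cap E(C')=\emptyset$ and $V(C)\cap V(C')\neq\emptyset$. If $H:=C\cup C'$ has girth at least $2k-2$, then $H$ can be decomposed into two paths, each of length $2k$.
   Context: Graphs are finite and simple; length = number of edges; girth = length of a shortest cycle. A decomposition of a graph is a set of subgraphs whose edge sets partition its edge set. *)

theory Defs
  imports Main
begin

text \<open>Finite simple graphs without isolated vertices are represented by their edge sets:
  an edge is a 2-element set of vertices. The vertex set of such a graph is the union of its edges.\<close>

definition verts :: "'a set set \<Rightarrow> 'a set" where
  "verts E = \<Union>E"

definition path_edges :: "'a list \<Rightarrow> 'a set set" where
  "path_edges xs = {{xs ! i, xs ! Suc i} | i. Suc i < length xs}"

definition cycle_edges :: "'a list \<Rightarrow> 'a set set" where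
  "cycle_edges xs = {{xs ! i, xs ! ((Suc i) mod length xs)} | i. i < length xs}"

definition is_path_of_length :: "'a set set \<Rightarrow> nat \<Rightarrow> bool" where
  "is_path_of_length P n \<longleftrightarrow>
     (\<exists>xs. distinct xs \<and> length xs = Suc n \<and> P = path_edges xs)"

definition is_cycle_of_length :: "'a set set \<Rightarrow> nat \<Rightarrow> bool" where
  "is_cycle_of_length C n \<longleftrightarrow>
     (n \<ge> 3 \<and> (\<exists>xs. distinct xs \<and> length xs = n \<and> C = cycle_edges xs))"

text \<open>Girth at least g: every cycle contained in the graph has length at least g
  (vacuous for forests, whose girth is infinite).\<close>
definition girth_at_least :: "'a set set \<Rightarrow> nat \<Rightarrow> bool" where
  "girth_at_least E g \<longleftrightarrow>
     (\<forall>C n. C \<subseteq> E \<and> is_cycle_of_length C n \<longrightarrow> g \<le> n)"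

definition decomposes_into_two_paths :: "'a set set \<Rightarrow> nat \<Rightarrow> bool" where
  "decomposes_into_two_paths E n \<longleftrightarrow>
     (\<exists>P1 P2. P1 \<union> P2 = E \<and> P1 \<inter> P2 = {} \<and>
        is_path_of_length P1 n \<and> is_path_of_length P2 n)"

end

theory Submission
  imports Defs
begin

lemma pe_Nil[simp]: "path_edges [] = {}"
  by (simp add: path_edges_def)

lemma pe_single[simp]: "path_edges [x] = {}"
  by (simp add: path_edges_def)

lemma pe_Cons2[simp]: "path_edges (x # y # zs) = insert {x,y} (path_edges (y # zs))"
proof
  show "path_edges (x # y # zs) \<subseteq> insert {x,y} (path_edges (y # zs))"
  proof
    fix e assume "e \<in> path_edges (x # y # zs)"
    then obtain i where e: "e = {(x#y#zs)!i, (x#y#zs)!Suc i}" and i: "Suc i < length (x#y#zs)"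
      by (auto simp: path_edges_def)
    show "e \<in> insert {x,y} (path_edges (y # zs))"
    proof (cases i)
      case 0 then show ?thesis using e by simp
    next
      case (Suc j) then show ?thesis using e i by (auto simp: path_edges_def)
    qed
  qed
next
  show "insert {x,y} (path_edges (y # zs)) \<subseteq> path_edges (x # y # zs)"
  proof
    fix e assume "e \<in> insert {x,y} (path_edges (y # zs))"
    then consider "e = {x,y}" | "e \<in> path_edges (y # zs)" by blast
    then show "e \<in> path_edges (x # y # zs)"
    proof cases
      case 1 then show ?thesis unfolding path_edges_def
        by (rule_tac CollectI, rule_tac x=0 in exI) simp
    next
      case 2
      then obtain j where e: "e = {(y#zs)!j, (y#zs)!Suc j}" and j: "Suc j < length (y#zs)"
        by (auto simp: path_edges_def)
      show ?thesis unfolding path_edges_def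
        by (rule CollectI, rule exI[of _ "Suc j"]) (use e j in simp)
    qed
  qed
qed

lemma pe_snoc: "xs \<noteq> [] \<Longrightarrow> path_edges (xs @ [y]) = insert {last xs, y} (path_edges xs)"
proof (induction xs rule: induct_list012)
  case (3 x z zs)
  show ?case
  proof (cases zs)
    case Nil then show ?thesis by (simp add: insert_commute)
  next
    case (Cons a b)
    then show ?thesis using 3 by (simp add: insert_commute)
  qed
qed auto

lemma pe_rev: "path_edges (rev xs) = path_edges xs"
proof (induction xs rule: induct_list012)
  case (3 x y zs)
  have "path_edges (rev (y # zs) @ [x]) = insert {last (rev (y#zs)), x} (path_edges (rev (y#zs)))"
    by (rule pe_snoc) simp
  then have "path_edges (rev (x # y # zs)) = insert {y, x} (path_edges (rev (y#zs)))"
    by simp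
  then show ?case using 3 by (simp add: insert_commute doubleton_eq_iff)
qed auto

lemma ce_Cons: "cycle_edges (x # xs) = path_edges (x # xs @ [x])"
proof -
  let ?l = "x # xs" let ?m = "x # xs @ [x]"
  have eq: "{?l!i, ?l!(Suc i mod length ?l)} = {?m!i, ?m!Suc i}" if "i < length ?l" for i
  proof (cases "Suc i < length ?l")
    case True
    then show ?thesis using that by (cases i) (auto simp: nth_append)
  next
    case False
    then have "Suc i = length ?l" using that by simp
    then show ?thesis using that by (auto simp: nth_append nth_Cons split: nat.splits)
  qed
  show ?thesis unfolding cycle_edges_def path_edges_def
  proof (intro set_eqI iffI)
    fix e assume "e \<in> {{?l!i, ?l!(Suc i mod length ?l)} |i. i < length ?l}"
    then obtain i where "i < length ?l" "e = {?l!i, ?l!(Suc i mod length ?l)}" by blast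
    then show "e \<in> {{?m!i, ?m!Suc i} |i. Suc i < length ?m}" using eq by force
  next
    fix e assume "e \<in> {{?m!i, ?m!Suc i} |i. Suc i < length ?m}"
    then obtain i where "Suc i < length ?m" "e = {?m!i, ?m!Suc i}" by blast
    then show "e \<in> {{?l!i, ?l!(Suc i mod length ?l)} |i. i < length ?l}" using eq
      by (metis (mono_tags, lifting) CollectI length_Cons length_append_singleton not_less_eq)
  qed
qed

lemma ce_rotate1: "cycle_edges (rotate1 xs) = cycle_edges xs"
proof (cases xs)
  case (Cons x ys)
  show ?thesis
  proof (cases ys)
    case (Cons y zs)
    have "cycle_edges (rotate1 xs) = path_edges ((y # zs @ [x]) @ [y])"
      using \<open>xs = x # ys\<close> Cons by (simp add: ce_Cons)
    also have "\<dots> = insert {x, y} (path_edges (y # zs @ [x]))"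
      by (subst pe_snoc) auto
    also have "\<dots> = cycle_edges xs"
      using \<open>xs = x # ys\<close> Cons by (simp add: ce_Cons)
    finally show ?thesis .
  qed (simp add: Cons)
qed simp

lemma ce_rotate: "cycle_edges (rotate n xs) = cycle_edges xs"
  by (induction n) (simp_all add: ce_rotate1)

lemma ce_rev_tail: "cycle_edges (v # rev r) = cycle_edges (v # r)"
proof -
  have "v # rev r @ [v] = rev (v # r @ [v])" by simp
  then show ?thesis by (simp only: ce_Cons pe_rev)
qed

lemma verts_pe: "length l \<ge> 2 \<Longrightarrow> verts (path_edges l) = set l"
proof (induction l rule: induct_list012)
  case (3 x y zs)
  show ?case
  proof (cases zs)
    case Nil then show ?thesis by (simp add: verts_def)
  next
    case (Cons a b)
    then show ?thesis using 3 by (auto simp: verts_def)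
  qed
qed auto

lemma verts_ce: "verts (cycle_edges (x # xs)) = set (x # xs)"
  by (simp add: ce_Cons verts_pe)

lemma pe_take: "path_edges (take n l) \<subseteq> path_edges l"
  unfolding path_edges_def by force

lemma pe_sub_ce: "path_edges ys \<subseteq> cycle_edges ys"
proof (cases ys)
  case (Cons v t)
  have "path_edges ys = path_edges (take (length ys) (v # t @ [v]))" using Cons by simp
  also have "\<dots> \<subseteq> path_edges (v # t @ [v])" by (rule pe_take)
  finally show ?thesis using Cons by (simp add: ce_Cons)
qed simp

lemma chord:
  assumes d: "distinct ys" and h: "ys ! 0 = v" and j: "j < length ys" "0 < j"
    and inE: "{v, ys!j} \<in> E" and notC: "{v, ys!j} \<notin> cycle_edges ys"
    and sub: "cycle_edges ys \<subseteq> E" and g: "girth_at_least E g"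
  shows "g \<le> Suc j"
proof -
  obtain t where ys: "ys = v # t" using h j by (cases ys) auto
  have "j \<noteq> 1"
  proof
    assume "j = 1"
    then obtain a t' where t: "t = a # t'" using j ys by (cases t) auto
    have "{v, ys!j} \<in> cycle_edges ys" using \<open>j = 1\<close> by (simp add: ys t ce_Cons)
    then show False using notC by simp
  qed
  define zs where "zs = take (Suc j) ys"
  have dz: "distinct zs" using d zs_def by simp
  have lz: "length zs = Suc j" using j zs_def by simp
  have zs2: "zs = v # take j t" using ys zs_def by simp
  have lastz: "last (v # take j t) = ys ! j"
  proof -
    have "t \<noteq> []" using j ys by auto
    then show ?thesis using j ys by (simp add: last_conv_nth)
  qed
  have "cycle_edges zs = path_edges ((v # take j t) @ [v])" using zs2 by (simp add: ce_Cons)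
  also have "\<dots> = insert {ys ! j, v} (path_edges zs)"
  proof -
    have "path_edges ((v # take j t) @ [v]) = insert {last (v # take j t), v} (path_edges (v # take j t))"
      by (rule pe_snoc) simp
    then show ?thesis by (simp only: lastz zs2)
  qed
  finally have cz0: "cycle_edges zs = insert {ys ! j, v} (path_edges zs)" .
  have cz: "cycle_edges zs = insert {v, ys ! j} (path_edges zs)"
    using cz0 by (metis insert_commute)
  have "path_edges zs \<subseteq> cycle_edges ys"
    unfolding zs_def using pe_take[of "Suc j" ys] pe_sub_ce[of ys] by (rule subset_trans)
  then have "cycle_edges zs \<subseteq> E" unfolding cz using inE sub by (intro insert_subsetI) auto
  moreover have "is_cycle_of_length (cycle_edges zs) (Suc j)"
    unfolding is_cycle_of_length_def using dz lz \<open>j \<noteq> 1\<close> j by auto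
  ultimately show ?thesis using g unfolding girth_at_least_def by blast
qed

lemma chord2:
  assumes d: "distinct ys" and l: "length ys = 2*k" and k: "k \<ge> 3" and h: "ys ! 0 = v"
    and j: "0 < j" "j < 2*k"
    and inE: "{v, ys!j} \<in> E" and notC: "{v, ys!j} \<notin> cycle_edges ys"
    and sub: "cycle_edges ys \<subseteq> E" and g: "girth_at_least E (2*k-2)"
  shows "j = 3"
proof -
  obtain t where ys: "ys = v # t" using h l k by (cases ys) auto
  have lt: "length t = 2*k - 1" using l ys by simp
  define ys1 where "ys1 = v # rev t"
  have d1: "distinct ys1" using d ys ys1_def by simp
  have h1: "ys1 ! 0 = v" using ys1_def by simp
  have c1: "cycle_edges ys1 = cycle_edges ys" using ys ys1_def ce_rev_tail by simp
  have l1: "length ys1 = 2*k" using lt ys1_def k by simp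
  have n1: "ys1 ! (2*k - j) = ys ! j"
  proof -
    have "ys1 ! (2*k - j) = rev t ! (2*k - j - 1)" using j ys1_def
      by (simp add: nth_Cons')
    also have "\<dots> = t ! (length t - Suc (2*k - j - 1))" using j lt by (simp add: rev_nth)
    also have "length t - Suc (2*k - j - 1) = j - 1" using j lt by simp
    also have "t ! (j - 1) = ys ! j" using j ys by (cases j) auto
    finally show ?thesis .
  qed
  have a: "2*k - 2 \<le> Suc j"
    by (rule chord[OF d h _ j(1) inE notC sub g]) (use l j in simp)
  have b: "2*k - 2 \<le> Suc (2*k - j)"
    by (rule chord[OF d1 h1 _ _ _ _ _ g]) (use l1 j n1 inE notC c1 sub in simp_all)
  show ?thesis using a b k j by linarith
qed



lemma rotate_front:
  assumes "v \<in> set xs"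
  shows "\<exists>ys. ys ! 0 = v \<and> set ys = set xs \<and> length ys = length xs \<and>
           (distinct xs \<longrightarrow> distinct ys) \<and> cycle_edges ys = cycle_edges xs"
proof -
  obtain i where i: "i < length xs" "xs ! i = v" using assms by (auto simp: in_set_conv_nth)
  have "rotate i xs = drop i xs @ take i xs" using i by (simp add: rotate_drop_take)
  then have "rotate i xs ! 0 = v" using i by (simp add: nth_append)
  then show ?thesis by (intro exI[of _ "rotate i xs"]) (simp add: ce_rotate)
qed

lemma edge_first: "{v, a} \<in> cycle_edges (v # a # r)"
  by (simp add: ce_Cons)

lemma orient:
  assumes k: "k \<ge> 3" and dx: "distinct xs" "length xs = 2*k"
    and dy: "distinct ys" "length ys = 2*k" and v: "v \<in> set xs" "v \<in> set ys"
    and disj: "cycle_edges xs \<inter> cycle_edges ys = {}"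
    and g: "girth_at_least (cycle_edges xs \<union> cycle_edges ys) (2*k-2)"
  shows "\<exists>c r. distinct (v#c#r) \<and> length r = 2*k-2 \<and> cycle_edges (v#c#r) = cycle_edges xs
      \<and> set (v#c#r) = set xs \<and> c \<notin> set ys"
proof -
  obtain xs0 where x0: "xs0 ! 0 = v" "set xs0 = set xs" "length xs0 = 2*k" "distinct xs0"
     "cycle_edges xs0 = cycle_edges xs" using rotate_front[OF v(1)] dx by auto
  obtain ys0 where y0: "ys0 ! 0 = v" "set ys0 = set ys" "length ys0 = 2*k" "distinct ys0"
     "cycle_edges ys0 = cycle_edges ys" using rotate_front[OF v(2)] dy by auto
  obtain r where r: "xs0 = v # r" using x0 k by (cases xs0) auto
  have lr: "length r = 2*k - 1" using r x0 by simp
  have key: "a = ys0 ! 3" if a: "a \<in> set ys" "{v,a} \<in> cycle_edges xs" "a \<noteq> v" for a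
  proof -
    obtain j where j: "j < 2*k" "ys0 ! j = a" using a y0 by (metis in_set_conv_nth)
    have "j \<noteq> 0"
    proof
      assume "j = 0" then have "a = v" using j(2) y0(1) by simp
      then show False using a(3) by simp
    qed
    have "j = 3"
      by (rule chord2[OF y0(4) y0(3) k y0(1), of j "cycle_edges xs \<union> cycle_edges ys"])
         (use j \<open>j \<noteq> 0\<close> a disj y0(5) g in auto)
    then show ?thesis using j by simp
  qed
  obtain a r' where ar: "r = a # r'" using lr k by (cases r) auto
  have "r' \<noteq> []" using lr ar k by auto
  then obtain b r'' where br: "rev r = b # r''" using ar by (cases "rev r") auto
  have dr: "distinct (v # r)" using x0 r by simp
  have ab: "a \<noteq> b"
  proof
    assume "a = b"
    have "b = last r" using br by (metis last_rev list.sel(1) rev_rev_ident)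
    then have "b = last r'" using ar \<open>r' \<noteq> []\<close> by simp
    then have "b \<in> set r'" using \<open>r' \<noteq> []\<close> by simp
    then show False using dr ar \<open>a = b\<close> by simp
  qed
  have ea: "{v,a} \<in> cycle_edges xs" using x0 r ar edge_first by metis
  have eb: "{v,b} \<in> cycle_edges xs"
    using x0 r br edge_first[of v b r''] ce_rev_tail[of v r] by metis
  have av: "a \<noteq> v" using dr ar by auto
  have "b \<in> set r" using br by (metis list.set_intros(1) set_rev)
  then have bv: "b \<noteq> v" using dr by auto
  show ?thesis
  proof (cases "a \<in> set ys")
    case False
    show ?thesis
      by (rule exI[of _ a], rule exI[of _ r']) (use False x0 r ar lr in auto)
  next
    case True
    have "b \<notin> set ys"
    proof
      assume "b \<in> set ys"
      then show False using key[OF True ea av] key[OF _ eb bv] ab by simp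
    qed
    moreover have "distinct (v # b # r'')" using dr br by (metis distinct.simps(2) distinct_rev set_rev)
    moreover have "set (v # b # r'') = set xs" using x0 r br by (metis list.simps(15) set_rev)
    moreover have "cycle_edges (v # b # r'') = cycle_edges xs"
      using x0 r br ce_rev_tail[of v r] by metis
    moreover have "length r'' = 2*k-2" using br lr by (metis diff_Suc_1 diff_diff_left length_Cons length_rev one_add_one)
    ultimately show ?thesis by blast
  qed
qed

lemma nochord:
  assumes d: "distinct (c # r @ [v])" and r: "r \<noteq> []"
  shows "{v,c} \<notin> path_edges (c # r @ [v])"
proof
  let ?l = "c # r @ [v]"
  assume "{v,c} \<in> path_edges ?l"
  then obtain i where i: "Suc i < length ?l" "{v,c} = {?l!i, ?l!Suc i}"
    unfolding path_edges_def by blast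
  have l0: "?l ! 0 = c" by simp
  have ll: "?l ! (length ?l - 1) = v" by (simp add: nth_append)
  have len: "length ?l \<ge> 3" using r by (cases r) auto
  from i(2) consider "?l!i = v" "?l!Suc i = c" | "?l!i = c" "?l!Suc i = v"
    by (auto simp: doubleton_eq_iff)
  then show False
  proof cases
    case 1
    then have "?l ! i = ?l ! (length ?l - 1)" using ll by simp
    then have "i = length ?l - 1" using d i(1) nth_eq_iff_index_eq[OF d, of i "length ?l - 1"] by simp
    then show False using i(1) by simp
  next
    case 2
    then have "?l ! Suc i = ?l ! (length ?l - 1)" using ll by simp
    then have "Suc i = length ?l - 1" using d i(1) nth_eq_iff_index_eq[OF d, of "Suc i" "length ?l - 1"] by simp
    moreover have "?l ! i = ?l ! 0" using 2 by simp
    then have "i = 0" using d i(1) nth_eq_iff_index_eq[OF d, of i 0] by simp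
    ultimately show False using len by simp
  qed
qed

theorem mainTheorem10:
  fixes C C' :: "'a set set" and k :: nat
  assumes "k \<ge> 3"
    and "is_cycle_of_length C (2 * k)"
    and "is_cycle_of_length C' (2 * k)"
    and "C \<inter> C' = {}"
    and "verts C \<inter> verts C' \<noteq> {}"
    and "girth_at_least (C \<union> C') (2 * k - 2)"
  shows "decomposes_into_two_paths (C \<union> C') (2 * k)"
  proof -
  obtain xs where xs: "distinct xs" "length xs = 2*k" "C = cycle_edges xs"
    using assms(2) unfolding is_cycle_of_length_def by blast
  obtain ys where ys: "distinct ys" "length ys = 2*k" "C' = cycle_edges ys"
    using assms(3) unfolding is_cycle_of_length_def by blast
  have vx: "verts C = set xs" using xs assms(1) by (cases xs) (simp_all add: verts_ce)
  have vy: "verts C' = set ys" using ys assms(1) by (cases ys) (simp_all add: verts_ce)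
  obtain v where v: "v \<in> set xs" "v \<in> set ys" using assms(5) vx vy by blast
  obtain c r where cr: "distinct (v#c#r)" "length r = 2*k-2" "cycle_edges (v#c#r) = C"
      "set (v#c#r) = set xs" "c \<notin> set ys"
    using orient[OF assms(1) xs(1,2) ys(1,2) v] assms(4,6) xs(3) ys(3) by blast
  obtain d s where ds: "distinct (v#d#s)" "length s = 2*k-2" "cycle_edges (v#d#s) = C'"
      "set (v#d#s) = set ys" "d \<notin> set xs"
    using orient[OF assms(1) ys(1,2) xs(1,2) v(2) v(1)] assms(4,6) xs(3) ys(3)
    by (metis Int_commute Un_commute)
  define A where "A = path_edges (c # r @ [v])"
  define B where "B = path_edges (d # s @ [v])"
  have CA: "C = insert {v,c} A" using cr(3) by (simp add: A_def ce_Cons)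
  have CB: "C' = insert {v,d} B" using ds(3) by (simp add: B_def ce_Cons)
  have P1: "path_edges (c # r @ [v, d]) = insert {v,d} A"
  proof -
    have "path_edges ((c # r @ [v]) @ [d]) = insert {last (c # r @ [v]), d} (path_edges (c # r @ [v]))"
      by (rule pe_snoc) simp
    then show ?thesis by (simp add: A_def)
  qed
  have P2: "path_edges (c # v # rev s @ [d]) = insert {v,c} B"
  proof -
    have "path_edges (v # rev s @ [d]) = path_edges (rev (d # s @ [v]))" by simp
    also have "\<dots> = B" unfolding B_def by (rule pe_rev)
    finally have "path_edges (v # rev s @ [d]) = B" .
    then show ?thesis by (simp add: insert_commute)
  qed
  have rne: "r \<noteq> []" and sne: "s \<noteq> []" using cr(2) ds(2) assms(1) by auto
  have nA: "{v,c} \<notin> A" unfolding A_def by (rule nochord) (use cr(1) rne in auto)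
  have nB: "{v,d} \<notin> B" unfolding B_def by (rule nochord) (use ds(1) rne sne in auto)
  have dist1: "distinct (c # r @ [v, d])" using cr(1) cr(4) ds(5) by auto
  have dist2: "distinct (c # v # rev s @ [d])" using ds(1) ds(4) cr(5) by auto
  have AB: "A \<inter> B = {}" using CA CB assms(4) by blast
  have ne: "{v,c} \<noteq> {v,d}" using CA CB assms(4) by blast
  have dAB: "{v,d} \<notin> A" using CA CB assms(4) by blast
  have dBA: "{v,c} \<notin> B" using CA CB assms(4) by blast
  show ?thesis unfolding decomposes_into_two_paths_def
  proof (intro exI conjI)
    show "path_edges (c # r @ [v, d]) \<union> path_edges (c # v # rev s @ [d]) = C \<union> C'"
      unfolding P1 P2 CA CB by blast
    show "path_edges (c # r @ [v, d]) \<inter> path_edges (c # v # rev s @ [d]) = {}"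
      unfolding P1 P2 using AB ne nA nB dAB dBA by blast
    show "is_path_of_length (path_edges (c # r @ [v, d])) (2 * k)"
      unfolding is_path_of_length_def using dist1 cr(2) assms(1) by (intro exI[of _ "c # r @ [v, d]"]) simp
    show "is_path_of_length (path_edges (c # v # rev s @ [d])) (2 * k)"
      unfolding is_path_of_length_def using dist2 ds(2) assms(1) by (intro exI[of _ "c # v # rev s @ [d]"]) simp
  qed
qed

end
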